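(* Let $\xi,\eta>0$, $p>2$, and $\lambda>1$ with $\lambda^2\left(1-\frac{1}{\lambda^2}\right)^{p/2}\ge 1$, and let $t\in[0,1]$. For $(x_1,y_1)\in[0,1/\lambda]\times[0,1/\lambda]$ define $$F(x_1,y_1)=\lambda^p(\xi x_1+\eta t y_1)^p+\left(\xi^2+\eta^2t^2-2\eta\xi t x_1y_1+2\eta\xi t\sqrt{1-x_1^2}\sqrt{1-y_1^2}\right)^{p/2}.$$ Then $$\max\left\{F(x_1,y_1):0\le x_1,y_1\le\tfrac{1}{\lambda}\right\}\le\max\Big\{\left(1+\lambda^{-2p/(p-2)}\right)(\xi+\eta t)^p;\ (\xi+\eta t)^p+\left(\xi^2+\eta^2t^2-\tfrac{4\eta\xi t}{\lambda^2}+2\eta\xi t\right)^{p/2};\ (\xi+\eta)^p+(\xi+\eta t)^{p-2}\cdot\tfrac{2[\xi-(2\eta\xi-\eta)t]}{\lambda^2}\Big\}.$$ *)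

theory Defs
  imports "HOL-Analysis.Analysis"
begin

definition Ffun :: "real \<Rightarrow> real \<Rightarrow> real \<Rightarrow> real \<Rightarrow> real \<Rightarrow> real \<Rightarrow> real \<Rightarrow> real" where
  "Ffun \<xi> \<eta> p lam t x1 y1 =
     lam powr p * (\<xi> * x1 + \<eta> * t * y1) powr p
     + (\<xi>^2 + \<eta>^2 * t^2 - 2 * \<eta> * \<xi> * t * x1 * y1
        + 2 * \<eta> * \<xi> * t * sqrt (1 - x1^2) * sqrt (1 - y1^2)) powr (p / 2)"

end

theory Submission
  imports Defs
begin

lemma powr_split1:
  fixes u p :: real
  assumes "0 \<le> u" "1 \<le> p"
  shows "u powr p = u * u powr (p - 1)"
proof (cases "u = 0")
  case True then show ?thesis by simp
next
  case False
  have "u powr p = u powr (1 + (p - 1))" by simp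
  also have "\<dots> = u powr 1 * u powr (p - 1)" by (rule powr_add)
  also have "\<dots> = u * u powr (p - 1)" using assms by simp
  finally show ?thesis .
qed

lemma sq1:
  fixes c x :: real
  assumes "0 \<le> c" "c \<le> 1" "0 \<le> x" "x \<le> c"
  shows "sqrt (1 - c^2) * sqrt (1 - x^2) \<le> 1 - c * x"
proof -
  have cx: "c * x \<le> 1" using assms by (metis mult_le_one order_trans)
  have "sqrt (1 - c^2) * sqrt (1 - x^2) = sqrt ((1 - c^2) * (1 - x^2))" by (simp add: real_sqrt_mult)
  also have "\<dots> \<le> sqrt ((1 - c * x)^2)"
  proof (rule real_sqrt_le_mono)
    have "(1 - c * x)^2 - (1 - c^2) * (1 - x^2) = (c - x)^2" by (simp add: power2_eq_square algebra_simps)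
    then show "(1 - c^2) * (1 - x^2) \<le> (1 - c * x)^2" by (smt (verit) zero_le_power2)
  qed
  also have "\<dots> = 1 - c * x" using cx by simp
  finally show ?thesis .
qed

lemma sq2:
  fixes c y :: real
  assumes "0 \<le> y" "y \<le> c" "c^2 \<le> 1/2"
  shows "c * sqrt (1 - y^2) \<le> sqrt (1 - c^2) * (2 * c - y)"
proof -
  have c0: "0 \<le> c" using assms by linarith
  have "c * sqrt (1 - y^2) = sqrt (c^2 * (1 - y^2))" using c0 by (simp add: real_sqrt_mult)
  also have "\<dots> \<le> sqrt ((1 - c^2) * (2 * c - y)^2)"
  proof (rule real_sqrt_le_mono)
    have e: "(1 - c^2) * (2 * c - y)^2 - c^2 * (1 - y^2) = (c - y) * (2 * c * (1 - 2 * c^2) + (c - y))"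
      by (simp add: power2_eq_square algebra_simps)
    have "0 \<le> (c - y) * (2 * c * (1 - 2 * c^2) + (c - y))"
      using assms c0 by (intro mult_nonneg_nonneg add_nonneg_nonneg) auto
    then show "c^2 * (1 - y^2) \<le> (1 - c^2) * (2 * c - y)^2" using e by linarith
  qed
  also have "\<dots> = sqrt (1 - c^2) * (2 * c - y)" using assms c0 by (simp add: real_sqrt_mult)
  finally show ?thesis .
qed

lemma Dbound:
  fixes c x y :: real
  assumes "0 \<le> x" "x \<le> c" "0 \<le> y" "y \<le> c" "c^2 \<le> 1/2"
  shows "sqrt (1 - x^2) * sqrt (1 - y^2) - x * y \<le> 1 - 2*c*x - 2*c*y + 2*c^2"
proof -
  define s where "s = sqrt (1 - x^2)"
  define r where "r = sqrt (1 - y^2)"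
  define k where "k = sqrt (1 - c^2)"
  have c0: "0 \<le> c" using assms by linarith
  have c1: "c \<le> 1" using power2_le_imp_le[of c 1] assms by simp
  have k0: "0 < k" unfolding k_def using assms by simp
  have kk: "k^2 = 1 - c^2" unfolding k_def using assms by simp
  have y1: "y^2 \<le> 1" using assms c1 by (intro power_le_one) auto
  have r0: "0 \<le> r" unfolding r_def using y1 by simp
  have h1: "k * s \<le> 1 - c * x" unfolding k_def s_def using sq1[OF c0 c1 assms(1,2)] .
  have h2: "c * r \<le> k * (2 * c - y)" unfolding k_def r_def using sq2[OF assms(3,4,5)] .
  have h3: "k * r \<le> 1 - c * y" unfolding k_def r_def using sq1[OF c0 c1 assms(3,4)] .
  have "k * (s * r) \<le> r * (1 - c * x)" using mult_right_mono[OF h1 r0] by (simp add: algebra_simps)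
  also have "r * (1 - c * x) = r * k^2 + (c * r) * (c - x)" unfolding kk by (simp add: algebra_simps power2_eq_square)
  also have "\<dots> \<le> k * (k * r) + k * (2 * c - y) * (c - x)"
    using mult_right_mono[OF h2, of "c - x"] assms by (simp add: power2_eq_square algebra_simps)
  also have "\<dots> \<le> k * (1 - c * y) + k * (2 * c - y) * (c - x)"
    using mult_left_mono[OF h3, of k] k0 by simp
  finally have "k * (s * r) \<le> k * ((1 - c * y) + (2 * c - y) * (c - x))" by (simp add: algebra_simps)
  then have "s * r \<le> (1 - c * y) + (2 * c - y) * (c - x)" using k0 by simp
  then show ?thesis unfolding s_def r_def by (simp add: algebra_simps power2_eq_square)
qed

lemma maj:
  fixes u v M N p :: real
  assumes "0 \<le> u" "0 \<le> v" "u \<le> M" "v \<le> M" "0 \<le> N" "u + v \<le> M + N" "1 \<le> p"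
  shows "u powr p + v powr p \<le> M powr p + N powr p"
proof (cases "u + v \<le> M")
  case True
  have M0: "0 \<le> M" using assms by linarith
  have "u powr (p-1) \<le> M powr (p-1)" "v powr (p-1) \<le> M powr (p-1)"
    using assms by (auto intro!: powr_mono2)
  then have "u * u powr (p-1) + v * v powr (p-1) \<le> u * M powr (p-1) + v * M powr (p-1)"
    using assms by (intro add_mono mult_left_mono) auto
  also have "\<dots> = (u + v) * M powr (p-1)" by (simp add: algebra_simps)
  also have "\<dots> \<le> M * M powr (p-1)" using True by (intro mult_right_mono) auto
  finally have "u powr p + v powr p \<le> M powr p"
    using powr_split1[OF assms(1,7)] powr_split1[OF assms(2,7)] powr_split1[OF M0 assms(7)] by simp
  moreover have "0 \<le> N powr p" by simp
  ultimately show ?thesis by linarith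
next
  case False
  define w where "w = u + v - M"
  have w0: "0 < w" using False w_def by simp
  have wN: "w \<le> N" using assms w_def by simp
  have uw: "w \<le> u" "w \<le> v" using assms w_def by auto
  show ?thesis
  proof (cases "w = M")
    case True
    then have "u = M" "v = M" using uw assms by auto
    then show ?thesis using wN True w0 assms(7) by (auto intro!: powr_mono2)
  next
    case False
    have wM: "w < M" using False uw assms by simp
    have cv: "convex_on {0<..} (\<lambda>x::real. x powr p)" using powr_convex assms(7) by blast
    define a where "a = (u - w) / (M - w)"
    define b where "b = (v - w) / (M - w)"
    have a01: "0 \<le> a" "a \<le> 1" unfolding a_def using uw wM assms by (auto simp: divide_simps)
    have b01: "0 \<le> b" "b \<le> 1" unfolding b_def using uw wM assms by (auto simp: divide_simps)
    have ab: "a + b = 1"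
    proof -
      have "a + b = ((u-w)+(v-w))/(M-w)" unfolding a_def b_def by (rule add_divide_distrib[symmetric])
      also have "\<dots> = 1" using wM w_def by simp
      finally show ?thesis .
    qed
    have ua: "(1 - a) * w + a * M = u"
    proof -
      have "a * (M - w) = u - w" unfolding a_def using wM by simp
      then have h: "a * M - a * w = u - w" by (simp add: right_diff_distrib)
      then show ?thesis by (simp add: left_diff_distrib)
    qed
    have vb: "(1 - b) * w + b * M = v"
    proof -
      have "b * (M - w) = v - w" unfolding b_def using wM by simp
      then have h: "b * M - b * w = v - w" by (simp add: right_diff_distrib)
      then show ?thesis by (simp add: left_diff_distrib)
    qed
    have c1: "((1 - a) * w + a * M) powr p \<le> (1 - a) * w powr p + a * M powr p"
      using convex_onD[OF cv a01, of w M] w0 wM by simp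
    have c2: "((1 - b) * w + b * M) powr p \<le> (1 - b) * w powr p + b * M powr p"
      using convex_onD[OF cv b01, of w M] w0 wM by simp
    have "u powr p \<le> (1 - a) * w powr p + a * M powr p"
      using c1 unfolding ua .
    moreover have "v powr p \<le> (1 - b) * w powr p + b * M powr p"
      using c2 unfolding vb .
    moreover have "w powr p \<le> N powr p" using w0 wN assms by (auto intro!: powr_mono2)
    moreover have "(1 - a) * w powr p + a * M powr p + ((1 - b) * w powr p + b * M powr p) = w powr p + M powr p"
    proof -
      have be: "b = 1 - a" using ab by simp
      show ?thesis unfolding be by (simp add: algebra_simps)
    qed
    ultimately show ?thesis by linarith
  qed
qed

lemma key:
  fixes A B lam x y :: real
  assumes A0: "A > 0" and B0: "B \<ge> 0" and l0: "lam > 0" and l2: "2 \<le> lam^2"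
    and x0: "0 \<le> x" and xl: "x \<le> 1/lam" and y0: "0 \<le> y" and yl: "y \<le> 1/lam"
  defines "Q \<equiv> A^2 + B^2 - 2*A*B*x*y + 2*A*B* sqrt(1-x^2)* sqrt(1-y^2)"
    and "Qc \<equiv> A^2 + B^2 - 4*A*B/lam^2 + 2*A*B"
  shows "0 \<le> Q \<and> 0 \<le> Qc \<and> sqrt Q \<le> A + B \<and> 0 \<le> lam*(A*x+B*y) \<and> lam*(A*x+B*y) \<le> A+B
     \<and> lam*(A*x+B*y) + sqrt Q \<le> A + B + sqrt Qc"
proof -
  define c where "c = 1/lam"
  define s where "s = sqrt (1 - x^2)"
  define r where "r = sqrt (1 - y^2)"
  have c0: "0 < c" using l0 c_def by simp
  have lc: "lam * c = 1" using l0 c_def by simp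
  have cc: "c^2 = 1/lam^2" unfolding c_def by (simp add: power_one_over)
  have c2: "c^2 \<le> 1/2" unfolding cc using l2 l0 by (simp add: divide_simps)
  have c1: "c \<le> 1" using power2_le_imp_le[of c 1] c2 by simp
  have xc: "x \<le> c" "y \<le> c" using xl yl c_def by auto
  have x1: "x^2 \<le> 1" "y^2 \<le> 1" using x0 y0 xc c1 by (auto intro!: power_le_one)
  have s01: "0 \<le> s" "s \<le> 1" unfolding s_def using x1 by auto
  have r01: "0 \<le> r" "r \<le> 1" unfolding r_def using x1 by auto
  have D: "s * r - x * y \<le> 1 - 2*c*x - 2*c*y + 2*c^2"
    unfolding s_def r_def using Dbound[OF x0 xc(1) y0 xc(2) c2] .
  have AB0: "0 \<le> A * B" using A0 B0 by simp
  have Qe: "Q = A^2 + B^2 + 2*A*B*(s*r - x*y)" unfolding Q_def s_def r_def by (simp add: algebra_simps)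
  have Qce: "Qc = A^2 + B^2 + 2*A*B*(1 - 2*c^2)" unfolding Qc_def cc by (simp add: algebra_simps)
  have t0: "0 \<le> 2*A*B*(1 - 2*c^2)" using AB0 c2 by simp
  have Qc0: "0 \<le> Qc" using Qce t0 by simp
  define m where "m = sqrt Qc"
  have mm: "m^2 = Qc" unfolding m_def using Qc0 by simp
  have mA: "A \<le> m" unfolding m_def using Qce t0 A0
    by (intro real_le_rsqrt) (simp add: power2_eq_square add_nonneg_nonneg)
  have mB: "B \<le> m" unfolding m_def using Qce t0 A0
    by (intro real_le_rsqrt) (simp add: power2_eq_square add_nonneg_nonneg)
  have m0: "0 < m" using mA A0 by simp
  have xy: "x * y \<le> 1/2"
  proof -
    have "x * y \<le> c * c" using x0 y0 xc by (intro mult_mono) auto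
    then show ?thesis using c2 by (simp add: power2_eq_square)
  qed
  have sr0: "0 \<le> s * r" using s01 r01 by simp
  have sr1: "s * r \<le> 1" using s01 r01 by (simp add: mult_le_one)
  have xy0: "0 \<le> x * y" using x0 y0 by simp
  have sq: "0 \<le> A^2 + B^2 - 2*(A*B)" 
  proof -
    have "(A-B)^2 = A^2+B^2-2*(A*B)" by (simp add: power2_diff)
    moreover have "0 \<le> (A-B)^2" by simp
    ultimately show ?thesis by linarith
  qed
  have e1: "2*A*B*(s*r - x*y) = 2*(A*B*(s*r)) - 2*(A*B*(x*y))" by (simp add: algebra_simps)
  have f1: "A*B*(x*y) \<le> A*B*(1/2)" using mult_left_mono[OF xy AB0] .
  have f2: "0 \<le> A*B*(s*r)" using AB0 sr0 by simp
  have f3: "A*B*(s*r) \<le> A*B" using mult_left_mono[OF sr1 AB0] by simp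
  have f4: "0 \<le> A*B*(x*y)" using AB0 xy0 by simp
  have Q0: "0 \<le> Q" using Qe e1 f1 f2 sq AB0 by linarith
  have QAB: "Q \<le> (A + B)^2" using Qe e1 f3 f4 by (simp add: power2_sum)
  have sQ: "sqrt Q \<le> A + B"
    using real_sqrt_le_mono[OF QAB] A0 B0 by simp
  have lx: "lam * x \<le> 1" "lam * y \<le> 1" using xl yl l0 by (auto simp: field_simps)
  have lin: "lam*(A*x+B*y) = A*(lam*x) + B*(lam*y)" by (simp add: algebra_simps)
  have g1: "A*(lam*x) \<le> A" using mult_left_mono[OF lx(1), of A] A0 by simp
  have g2: "B*(lam*y) \<le> B" using mult_left_mono[OF lx(2), of B] B0 by simp
  have u0: "0 \<le> lam*(A*x+B*y)" using l0 A0 B0 x0 y0 by simp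
  have uM: "lam*(A*x+B*y) \<le> A + B" using lin g1 g2 by linarith
  have h1: "2*A*B*(s*r - x*y) \<le> 2*A*B*(1 - 2*c*x - 2*c*y + 2*c^2)"
    using mult_left_mono[OF D, of "2*A*B"] AB0 by simp
  have h2: "2*A*B*(1 - 2*c*x - 2*c*y + 2*c^2) - 2*A*B*(1 - 2*c^2) = 2*A*(c-x)*(2*B*c) + 2*B*(c-y)*(2*A*c)"
    by (simp add: algebra_simps power2_eq_square)
  have lamc: "2 * c \<le> lam"
  proof -
    have "2 * c = 2 / lam" using c_def by simp
    also have "\<dots> \<le> lam" using l0 l2 by (simp add: divide_simps power2_eq_square)
    finally show ?thesis .
  qed
  have k1: "2*B*c \<le> m * lam"
  proof -
    have "B * (2*c) \<le> B * lam" using mult_left_mono[OF lamc B0] .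
    also have "\<dots> \<le> m * lam" using mult_right_mono[OF mB] l0 by simp
    finally show ?thesis by simp
  qed
  have k2: "2*A*c \<le> m * lam"
  proof -
    have "A * (2*c) \<le> A * lam" using mult_left_mono[OF lamc] A0 by simp
    also have "\<dots> \<le> m * lam" using mult_right_mono[OF mA] l0 by simp
    finally show ?thesis by simp
  qed
  have n1: "2*A*(c-x)*(2*B*c) \<le> 2*A*(c-x)*(m*lam)"
    using mult_left_mono[OF k1, of "2*A*(c-x)"] A0 xc by simp
  have n2: "2*B*(c-y)*(2*A*c) \<le> 2*B*(c-y)*(m*lam)"
    using mult_left_mono[OF k2, of "2*B*(c-y)"] B0 xc by simp
  have n3: "2*A*(c-x)*(m*lam) + 2*B*(c-y)*(m*lam) = 2*m*(lam*(A*(c-x)+B*(c-y)))"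
    by (simp add: algebra_simps)
  have QQ: "Q - m^2 \<le> 2*m*(lam*(A*(c-x)+B*(c-y)))"
    using Qe Qce mm h1 h2 n1 n2 n3 by linarith
  have sqQ: "(sqrt Q)^2 = Q" using Q0 by simp
  have "0 \<le> (sqrt Q - m)^2" by simp
  then have "2*m* sqrt Q \<le> Q + m^2" using sqQ by (simp add: power2_diff algebra_simps)
  then have "2*m* sqrt Q \<le> 2*m*(m + lam*(A*(c-x)+B*(c-y)))" 
  proof -
    have "2*m*(m + lam*(A*(c-x)+B*(c-y))) = 2*m^2 + 2*m*(lam*(A*(c-x)+B*(c-y)))"
      by (simp add: algebra_simps power2_eq_square)
    then show ?thesis using QQ \<open>2*m* sqrt Q \<le> Q + m^2\<close> by linarith
  qed
  then have "sqrt Q \<le> m + lam*(A*(c-x)+B*(c-y))" using m0 by simp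
  moreover have "lam*(A*(c-x)+B*(c-y)) = A + B - lam*(A*x+B*y)"
  proof -
    have "lam*(A*(c-x)+B*(c-y)) = A*(lam*c) + B*(lam*c) - lam*(A*x+B*y)" by (simp add: algebra_simps)
    then show ?thesis using lc by simp
  qed
  ultimately have main: "lam*(A*x+B*y) + sqrt Q \<le> A + B + sqrt Qc" unfolding m_def by linarith
  show ?thesis using Q0 Qc0 sQ u0 uM main by simp
qed

theorem lemma2:
  fixes \<xi> \<eta> p lam t :: real
  assumes "\<xi> > 0" and "\<eta> > 0" and "p > 2" and "lam > 1"
    and "lam^2 * (1 - 1 / lam^2) powr (p / 2) \<ge> 1"
    and "0 \<le> t" and "t \<le> 1"
  shows "(SUP z \<in> {0..1/lam} \<times> {0..1/lam}. Ffun \<xi> \<eta> p lam t (fst z) (snd z))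
    \<le> max ((1 + lam powr (- 2 * p / (p - 2))) * (\<xi> + \<eta> * t) powr p)
        (max ((\<xi> + \<eta> * t) powr p
               + (\<xi>^2 + \<eta>^2 * t^2 - 4 * \<eta> * \<xi> * t / lam^2 + 2 * \<eta> * \<xi> * t) powr (p / 2))
             ((\<xi> + \<eta>) powr p
               + (\<xi> + \<eta> * t) powr (p - 2) * (2 * (\<xi> - (2 * \<eta> * \<xi> - \<eta>) * t) / lam^2)))"
proof -
  note as = assms
  define A where "A = \<xi>"
  define B where "B = \<eta> * t"
  define Qc where "Qc = A^2 + B^2 - 4*A*B/lam^2 + 2*A*B"
  define bnd where "bnd = (\<xi> + \<eta> * t) powr p
               + (\<xi>^2 + \<eta>^2 * t^2 - 4 * \<eta> * \<xi> * t / lam^2 + 2 * \<eta> * \<xi> * t) powr (p / 2)"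
  have A0: "A > 0" using as A_def by simp
  have B0: "B \<ge> 0" using as B_def by simp
  have l0: "lam > 0" using as by simp
  have l2: "2 \<le> lam^2"
  proof -
    define q where "q = 1 - 1 / lam^2"
    have l1: "1 < lam^2" using as by (simp add: one_less_power)
    have i1: "1/lam^2 < 1" using l1 by (simp add: divide_less_eq)
    have i2: "0 < 1/lam^2" using l0 by simp
    have q0: "0 < q" "q \<le> 1" using i1 i2 q_def by auto
    have "q powr (p/2) \<le> q" using powr_le_one_le[OF q0] as by simp
    then have h: "lam^2 * q powr (p/2) \<le> lam^2 * q" by (simp add: mult_left_mono)
    have "1 \<le> lam^2 * q powr (p/2)" using as(5) unfolding q_def .
    then have "1 \<le> lam^2 * q" using h by linarith
    also have "lam^2 * q = lam^2 - 1" unfolding q_def using l0 by (simp add: field_simps)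
    finally show ?thesis by simp
  qed
  have p1: "1 \<le> p" using as by simp
  have bnd_eq: "bnd = (A + B) powr p + sqrt Qc powr p"
  proof -
    have e: "\<xi>^2 + \<eta>^2 * t^2 - 4 * \<eta> * \<xi> * t / lam^2 + 2 * \<eta> * \<xi> * t = Qc"
      unfolding Qc_def A_def B_def by (simp add: power_mult_distrib algebra_simps)
    have Qc0: "0 \<le> Qc" using key[OF A0 B0 l0 l2, of 0 0] l0 unfolding Qc_def by simp
    have "sqrt Qc powr p = (Qc powr (1/2)) powr p" using Qc0 by (simp add: powr_half_sqrt)
    also have "\<dots> = Qc powr (p/2)" by (simp add: powr_powr)
    finally show ?thesis unfolding bnd_def e A_def B_def by simp
  qed
  have pt: "Ffun \<xi> \<eta> p lam t x y \<le> bnd" if xy: "x \<in> {0..1/lam}" "y \<in> {0..1/lam}" for x y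
  proof -
    define Q where "Q = A^2 + B^2 - 2*A*B*x*y + 2*A*B* sqrt(1-x^2)* sqrt(1-y^2)"
    have K: "0 \<le> Q \<and> 0 \<le> Qc \<and> sqrt Q \<le> A + B \<and> 0 \<le> lam*(A*x+B*y) \<and> lam*(A*x+B*y) \<le> A+B
     \<and> lam*(A*x+B*y) + sqrt Q \<le> A + B + sqrt Qc"
      using key[OF A0 B0 l0 l2, of x y] xy unfolding Q_def Qc_def by auto
    have eF1: "lam powr p * (\<xi> * x + \<eta> * t * y) powr p = (lam*(A*x+B*y)) powr p"
      unfolding A_def B_def by (simp add: powr_mult)
    have eQ: "\<xi>^2 + \<eta>^2 * t^2 - 2 * \<eta> * \<xi> * t * x * y
        + 2 * \<eta> * \<xi> * t * sqrt (1 - x^2) * sqrt (1 - y^2) = Q"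
      unfolding Q_def A_def B_def by (simp add: power_mult_distrib algebra_simps)
    have eF2: "Q powr (p/2) = sqrt Q powr p"
    proof -
      have "sqrt Q powr p = (Q powr (1/2)) powr p" using K by (simp add: powr_half_sqrt)
      also have "\<dots> = Q powr (p/2)" by (simp add: powr_powr)
      finally show ?thesis by simp
    qed
    have "Ffun \<xi> \<eta> p lam t x y = (lam*(A*x+B*y)) powr p + sqrt Q powr p"
      unfolding Ffun_def eF1 eQ eF2 ..
    also have "\<dots> \<le> (A + B) powr p + sqrt Qc powr p"
      using K p1 by (intro maj) auto
    finally show ?thesis using bnd_eq by simp
  qed
  have "(SUP z \<in> {0..1/lam} \<times> {0..1/lam}. Ffun \<xi> \<eta> p lam t (fst z) (snd z)) \<le> bnd"
  proof (rule cSUP_least)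
    show "{0..1/lam} \<times> {0..1/lam} \<noteq> {}" using l0 by auto
    fix z assume "z \<in> {0..1/lam} \<times> {0..1/lam}"
    then show "Ffun \<xi> \<eta> p lam t (fst z) (snd z) \<le> bnd" using pt by (cases z) auto
  qed
  then show ?thesis unfolding bnd_def by simp
qed

end
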